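(* Let $a_{max}\ge 1$, $U_0\ge 0$, $T>0$ and $t_0\ge 0$. Then there exist reals $t_0<t_1<t_2<\cdots$ and, for each $k\ge 0$, a real $s_k$ with $t_k\le s_k$ and $s_k+T\le t_{k+1}$, such that for every affine map $\varphi(s)=as+b$ with $0<a\le a_{max}$, $1/a\le a_{max}$ and $|b|\le a_{max}U_0$, and every $k\ge0$, one has $\varphi([s_k,s_k+T))\subseteq[t_k,t_{k+1})$.
   Context: Interpretation: the protocol stages are assigned adjacent intervals $[t_k,t_{k+1})$ of local clock time. A node $i$ transmits a message of size $W$ (via a MAC code guaranteeing delivery within a delay $T=T_{MAC}(W)$) during the local-time window $[s_k,s_k+T)$ of its own clock. For two good nodes $i,j$, node $j$'s clock reading as a function of node $i$'s reading $s$ is $\tau^j_i(s)=a_{ji}s+b_{ji}$, where all relative skews satisfy $0<a_{ij}\le a_{max}$ (for both orders, so $a_{ji}=1/a_{ij}\ge 1/a_{max}$) and $|b_{ji}|\le a_{max}U_0$; $\varphi$ plays the role of $\tau^j_i$. The conclusion says the message is received during the same interval as measured by node $j$'s clock. *)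

theory Defs
  imports "HOL-Analysis.Analysis"
begin

end

theory Submission
  imports Defs
begin

theorem lemma6:
  fixes a_max U0 T t0 :: real
  assumes "a_max \<ge> 1" and "U0 \<ge> 0" and "T > 0" and "t0 \<ge> 0"
  shows "\<exists>t s :: nat \<Rightarrow> real. t 0 = t0 \<and> strict_mono t \<and>
    (\<forall>k. t k \<le> s k \<and> s k + T \<le> t (Suc k)) \<and>
    (\<forall>a b :: real. 0 < a \<and> a \<le> a_max \<and> 1 / a \<le> a_max \<and> \<bar>b\<bar> \<le> a_max * U0 \<longrightarrow>
       (\<forall>k. (\<lambda>x. a * x + b) ` {s k..<s k + T} \<subseteq> {t k..<t (Suc k)}))"
proof -
  define A where "A = a_max"
  define B where "B = a_max * U0"
  have A1: "A \<ge> 1" and B0: "B \<ge> 0" using assms by (auto simp: A_def B_def)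
  define t :: "nat \<Rightarrow> real" where "t = rec_nat t0 (\<lambda>_ x. A * (A * (x + B) + T) + B)"
  define s :: "nat \<Rightarrow> real" where "s = (\<lambda>k. A * (t k + B))"
  have t0': "t 0 = t0" by (simp add: t_def)
  have tS: "\<And>k. t (Suc k) = A * (s k + T) + B" by (simp add: t_def s_def)
  have tpos: "\<And>k. t k \<ge> 0"
  proof -
    fix k show "t k \<ge> 0"
    proof (induction k)
      case 0 then show ?case using assms by (simp add: t0')
    next
      case (Suc k)
      have "s k \<ge> 0" using Suc A1 B0 by (simp add: s_def)
      then show ?case using A1 B0 assms(3) by (simp add: tS)
    qed
  qed
  have ts: "\<And>k. t k \<le> s k"
  proof -
    fix k
    have "t k \<le> t k + B" using B0 by simp
    also have "\<dots> \<le> A * (t k + B)" using A1 tpos[of k] B0 mult_right_mono[of 1 A "t k + B"] by simp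
    finally show "t k \<le> s k" by (simp add: s_def)
  qed
  have spos: "\<And>k. s k \<ge> 0" using ts tpos by (meson order_trans)
  have st: "\<And>k. s k + T \<le> t (Suc k)"
  proof -
    fix k
    have "s k + T \<le> A * (s k + T)" using A1 spos[of k] assms(3) mult_right_mono[of 1 A "s k + T"] by simp
    then show "s k + T \<le> t (Suc k)" using B0 by (simp add: tS)
  qed
  have sm: "strict_mono t"
    unfolding strict_mono_Suc_iff
  proof
    fix k show "t k < t (Suc k)" using ts[of k] st[of k] assms(3) by linarith
  qed
  have img: "(\<lambda>x. a * x + b) ` {s k..<s k + T} \<subseteq> {t k..<t (Suc k)}"
    if h: "0 < a" "a \<le> a_max" "1 / a \<le> a_max" "\<bar>b\<bar> \<le> a_max * U0" for a b k
  proof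
    fix y assume "y \<in> (\<lambda>x. a * x + b) ` {s k..<s k + T}"
    then obtain x where x: "s k \<le> x" "x < s k + T" and y: "y = a * x + b" by auto
    have x0: "x \<ge> 0" using x spos[of k] by linarith
    have aA: "1 \<le> a * A" using h(1) h(3) by (simp add: A_def divide_le_eq mult.commute)
    have "A * (t k + B) \<le> x" using x by (simp add: s_def)
    hence "a * (A * (t k + B)) \<le> a * x" using h by simp
    moreover have "t k + B \<le> (a * A) * (t k + B)" using aA tpos[of k] B0 mult_right_mono[of 1 "a * A" "t k + B"] by simp
    ultimately have "t k + B \<le> a * x" by (simp add: mult.assoc)
    hence lo: "t k \<le> y" using h y by (simp add: B_def abs_le_iff)
    have "a * x < a * (s k + T)" using h x by simp
    also have "\<dots> \<le> A * (s k + T)" using h spos[of k] assms(3)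
      by (intro mult_right_mono) (auto simp: A_def)
    finally have "y < t (Suc k)" using h y by (simp add: tS B_def abs_le_iff)
    with lo show "y \<in> {t k..<t (Suc k)}" by simp
  qed
  have "\<forall>a b :: real. 0 < a \<and> a \<le> a_max \<and> 1 / a \<le> a_max \<and> \<bar>b\<bar> \<le> a_max * U0 \<longrightarrow>
       (\<forall>k. (\<lambda>x. a * x + b) ` {s k..<s k + T} \<subseteq> {t k..<t (Suc k)})"
    using img by blast
  moreover have "\<forall>k. t k \<le> s k \<and> s k + T \<le> t (Suc k)" using ts st by blast
  ultimately show ?thesis using t0' sm by blast
qed

end
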